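(* Let $S$ be a $\Gamma$-semiring with zero having a left unity and a right unity, and let $n$ be a positive integer. Then there exists an inclusion preserving bijection between the set of all fuzzy ideals of $S$ and the set of all fuzzy ideals of the matrix $\Gamma_n$-semiring $S_n$.
   Context: A $\Gamma$-semiring: $S$ and $\Gamma$ are additive commutative semigroups with a map $S\times\Gamma\times S\to S$, $(a,\alpha,b)\mapsto a\alpha b$, such that $(a+b)\alpha c=a\alpha c+b\alpha c$, $a\alpha(b+c)=a\alpha b+a\alpha c$, $a(\alpha+\beta)b=a\alpha b+a\beta b$, $a\alpha(b\beta c)=(a\alpha b)\beta c$. With zero: $(S,+)$, $(\Gamma,+)$ are monoids, $0_S\alpha x=0_S=x\alpha0_S$, $x0_\Gamma y=0_S$. A left unity of $S$ is a finite family $e_i\in S,\delta_i\in\Gamma$ with $\sum_ie_i\delta_ia=a$ for all $a\in S$; a right unity is a finite family $\gamma_j\in\Gamma,f_j\in S$ with $\sum_ja\gamma_jf_j=a$ for all $a\in S$. $S_n$ (resp. $\Gamma_n$) is the set of $n\times n$ matrices with entries in $S$ (resp. $\Gamma$), with entrywise addition and, for $A=[a_{ij}],B=[b_{ij}]\in S_n$, $\Delta=[\delta_{ij}]\in\Gamma_n$, $(A\Delta B)_{ij}=\sum_{k,l}a_{ik}\delta_{kl}b_{lj}$; this makes $S_n$ a $\Gamma_n$-semiring with zero. A fuzzy ideal of a $\Gamma$-semiring $T$ is a map $\mu:T\to[0,1]$, not identically $0$, with $\mu(x+y)\ge\min[\mu(x),\mu(y)]$, $\mu(x\gamma y)\ge\mu(y)$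 and $\mu(x\gamma y)\ge\mu(x)$ for all $x,y\in T$ and all $\gamma$; by convention fuzzy ideals satisfy $\mu(0)=1$. Inclusion of fuzzy subsets is pointwise $\le$. *)

theory Defs
  imports Complex_Main
begin

fun fsum :: "('a \<Rightarrow> 'a \<Rightarrow> 'a) \<Rightarrow> 'a \<Rightarrow> (nat \<Rightarrow> 'a) \<Rightarrow> nat \<Rightarrow> 'a" where
  "fsum add z f 0 = z"
| "fsum add z f (Suc m) = add (fsum add z f m) (f m)"

definition comm_semigroup_on :: "'a set \<Rightarrow> ('a \<Rightarrow> 'a \<Rightarrow> 'a) \<Rightarrow> bool" where
  "comm_semigroup_on A add \<longleftrightarrow>
     (\<forall>x\<in>A. \<forall>y\<in>A. add x y \<in> A) \<and>
     (\<forall>x\<in>A. \<forall>y\<in>A. \<forall>z\<in>A. add (add x y) z = add x (add y z)) \<and>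
     (\<forall>x\<in>A. \<forall>y\<in>A. add x y = add y x)"

definition gamma_semiring ::
  "'a set \<Rightarrow> 'g set \<Rightarrow> ('a \<Rightarrow> 'a \<Rightarrow> 'a) \<Rightarrow> ('g \<Rightarrow> 'g \<Rightarrow> 'g) \<Rightarrow> ('a \<Rightarrow> 'g \<Rightarrow> 'a \<Rightarrow> 'a) \<Rightarrow> bool" where
  "gamma_semiring S G addS addG mult \<longleftrightarrow>
     comm_semigroup_on S addS \<and> comm_semigroup_on G addG \<and>
     (\<forall>a\<in>S. \<forall>\<alpha>\<in>G. \<forall>b\<in>S. mult a \<alpha> b \<in> S) \<and>
     (\<forall>a\<in>S. \<forall>b\<in>S. \<forall>c\<in>S. \<forall>\<alpha>\<in>G. mult (addS a b) \<alpha> c = addS (mult a \<alpha> c) (mult b \<alpha> c)) \<and>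
     (\<forall>a\<in>S. \<forall>b\<in>S. \<forall>c\<in>S. \<forall>\<alpha>\<in>G. mult a \<alpha> (addS b c) = addS (mult a \<alpha> b) (mult a \<alpha> c)) \<and>
     (\<forall>a\<in>S. \<forall>b\<in>S. \<forall>\<alpha>\<in>G. \<forall>\<beta>\<in>G. mult a (addG \<alpha> \<beta>) b = addS (mult a \<alpha> b) (mult a \<beta> b)) \<and>
     (\<forall>a\<in>S. \<forall>b\<in>S. \<forall>c\<in>S. \<forall>\<alpha>\<in>G. \<forall>\<beta>\<in>G. mult a \<alpha> (mult b \<beta> c) = mult (mult a \<alpha> b) \<beta> c)"

definition gamma_semiring_zero ::
  "'a set \<Rightarrow> 'g set \<Rightarrow> ('a \<Rightarrow> 'a \<Rightarrow> 'a) \<Rightarrow> 'a \<Rightarrow> ('g \<Rightarrow> 'g \<Rightarrow> 'g) \<Rightarrow> 'g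
     \<Rightarrow> ('a \<Rightarrow> 'g \<Rightarrow> 'a \<Rightarrow> 'a) \<Rightarrow> bool" where
  "gamma_semiring_zero S G addS zS addG zG mult \<longleftrightarrow>
     gamma_semiring S G addS addG mult \<and>
     zS \<in> S \<and> (\<forall>x\<in>S. addS zS x = x \<and> addS x zS = x) \<and>
     zG \<in> G \<and> (\<forall>\<alpha>\<in>G. addG zG \<alpha> = \<alpha> \<and> addG \<alpha> zG = \<alpha>) \<and>
     (\<forall>\<alpha>\<in>G. \<forall>x\<in>S. mult zS \<alpha> x = zS \<and> mult x \<alpha> zS = zS) \<and>
     (\<forall>x\<in>S. \<forall>y\<in>S. mult x zG y = zS)"

definition has_left_unity ::
  "'a set \<Rightarrow> 'g set \<Rightarrow> ('a \<Rightarrow> 'a \<Rightarrow> 'a) \<Rightarrow> 'a \<Rightarrow> ('a \<Rightarrow> 'g \<Rightarrow> 'a \<Rightarrow> 'a) \<Rightarrow> bool" where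
  "has_left_unity S G addS zS mult \<longleftrightarrow>
     (\<exists>(m::nat) e \<delta>. (\<forall>i<m. e i \<in> S \<and> \<delta> i \<in> G) \<and>
        (\<forall>a\<in>S. fsum addS zS (\<lambda>i. mult (e i) (\<delta> i) a) m = a))"

definition has_right_unity ::
  "'a set \<Rightarrow> 'g set \<Rightarrow> ('a \<Rightarrow> 'a \<Rightarrow> 'a) \<Rightarrow> 'a \<Rightarrow> ('a \<Rightarrow> 'g \<Rightarrow> 'a \<Rightarrow> 'a) \<Rightarrow> bool" where
  "has_right_unity S G addS zS mult \<longleftrightarrow>
     (\<exists>(m::nat) \<gamma> f. (\<forall>j<m. \<gamma> j \<in> G \<and> f j \<in> S) \<and>
        (\<forall>a\<in>S. fsum addS zS (\<lambda>j. mult a (\<gamma> j) (f j)) m = a))"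

text \<open>n x n matrices, represented as functions nat => nat => 'a with entries
  outside the index range {0..<n} x {0..<n} fixed to the zero element.\<close>
definition mat_carrier :: "'a set \<Rightarrow> 'a \<Rightarrow> nat \<Rightarrow> (nat \<Rightarrow> nat \<Rightarrow> 'a) set" where
  "mat_carrier A z n = {M. (\<forall>i<n. \<forall>j<n. M i j \<in> A) \<and> (\<forall>i j. (n \<le> i \<or> n \<le> j) \<longrightarrow> M i j = z)}"

definition mat_add :: "('a \<Rightarrow> 'a \<Rightarrow> 'a) \<Rightarrow> 'a \<Rightarrow> nat \<Rightarrow>
    (nat \<Rightarrow> nat \<Rightarrow> 'a) \<Rightarrow> (nat \<Rightarrow> nat \<Rightarrow> 'a) \<Rightarrow> (nat \<Rightarrow> nat \<Rightarrow> 'a)" where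
  "mat_add add z n M N = (\<lambda>i j. if i < n \<and> j < n then add (M i j) (N i j) else z)"

definition mat_zero :: "'a \<Rightarrow> (nat \<Rightarrow> nat \<Rightarrow> 'a)" where
  "mat_zero z = (\<lambda>i j. z)"

definition mat_mult :: "('a \<Rightarrow> 'a \<Rightarrow> 'a) \<Rightarrow> 'a \<Rightarrow> ('a \<Rightarrow> 'g \<Rightarrow> 'a \<Rightarrow> 'a) \<Rightarrow> nat \<Rightarrow>
    (nat \<Rightarrow> nat \<Rightarrow> 'a) \<Rightarrow> (nat \<Rightarrow> nat \<Rightarrow> 'g) \<Rightarrow> (nat \<Rightarrow> nat \<Rightarrow> 'a) \<Rightarrow> (nat \<Rightarrow> nat \<Rightarrow> 'a)" where
  "mat_mult add z mult n A D B =
     (\<lambda>i j. if i < n \<and> j < n then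
        fsum add z (\<lambda>k. fsum add z (\<lambda>l. mult (A i k) (D k l) (B l j)) n) n
      else z)"

text \<open>Fuzzy ideal of a Gamma-semiring with carrier T, Gamma-carrier G, addition add,
  zero z, product mult.  Fuzzy subsets are represented extensionally: value 0 outside T.\<close>
definition fuzzy_ideal ::
  "'x set \<Rightarrow> 'g set \<Rightarrow> ('x \<Rightarrow> 'x \<Rightarrow> 'x) \<Rightarrow> 'x \<Rightarrow> ('x \<Rightarrow> 'g \<Rightarrow> 'x \<Rightarrow> 'x) \<Rightarrow> ('x \<Rightarrow> real) \<Rightarrow> bool" where
  "fuzzy_ideal T G add z mult \<mu> \<longleftrightarrow>
     (\<forall>x\<in>T. 0 \<le> \<mu> x \<and> \<mu> x \<le> 1) \<and>
     (\<forall>x. x \<notin> T \<longrightarrow> \<mu> x = 0) \<and>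
     (\<exists>x\<in>T. \<mu> x \<noteq> 0) \<and>
     (\<forall>x\<in>T. \<forall>y\<in>T. \<mu> (add x y) \<ge> min (\<mu> x) (\<mu> y)) \<and>
     (\<forall>x\<in>T. \<forall>y\<in>T. \<forall>\<gamma>\<in>G. \<mu> (mult x \<gamma> y) \<ge> \<mu> y \<and> \<mu> (mult x \<gamma> y) \<ge> \<mu> x) \<and>
     \<mu> z = 1"

definition fuzzy_ideals ::
  "'x set \<Rightarrow> 'g set \<Rightarrow> ('x \<Rightarrow> 'x \<Rightarrow> 'x) \<Rightarrow> 'x \<Rightarrow> ('x \<Rightarrow> 'g \<Rightarrow> 'x \<Rightarrow> 'x) \<Rightarrow> ('x \<Rightarrow> real) set" where
  "fuzzy_ideals T G add z mult = {\<mu>. fuzzy_ideal T G add z mult \<mu>}"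

definition fuzzy_incl :: "'x set \<Rightarrow> ('x \<Rightarrow> real) \<Rightarrow> ('x \<Rightarrow> real) \<Rightarrow> bool" where
  "fuzzy_incl T \<mu> \<nu> \<longleftrightarrow> (\<forall>x\<in>T. \<mu> x \<le> \<nu> x)"

end

theory Submission imports Defs begin

lemma fsum_ge:
  assumes cl: "\<forall>x\<in>T. \<forall>y\<in>T. add x y \<in> T" and zT: "z \<in> T" and cz: "c \<le> \<mu> z"
    and mn: "\<forall>x\<in>T. \<forall>y\<in>T. (\<mu> :: 'x \<Rightarrow> real) (add x y) \<ge> min (\<mu> x) (\<mu> y)"
    and h: "\<forall>k<m. f k \<in> T \<and> c \<le> \<mu> (f k)"
  shows "fsum add z f m \<in> T \<and> c \<le> \<mu> (fsum add z f m)"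
  using h
proof (induction m)
  case 0 then show ?case using zT cz by simp
next
  case (Suc m)
  then have IH: "fsum add z f m \<in> T \<and> c \<le> \<mu> (fsum add z f m)" by simp
  have fm: "f m \<in> T" "c \<le> \<mu> (f m)" using Suc.prems by auto
  have "min (\<mu> (fsum add z f m)) (\<mu> (f m)) \<le> \<mu> (add (fsum add z f m) (f m))"
    using mn IH fm by blast
  moreover have "c \<le> min (\<mu> (fsum add z f m)) (\<mu> (f m))" using IH fm by simp
  ultimately show ?case using IH fm cl by auto
qed

lemma fsum_mat_add:
  "fsum (mat_add add z n) (mat_zero z) H m a b =
     (if a < n \<and> b < n then fsum add z (\<lambda>k. H k a b) m else z)"
  by (induction m) (auto simp: mat_add_def mat_zero_def)

lemma fi_add: "fuzzy_ideal T G add z mult \<mu> \<Longrightarrow> x \<in> T \<Longrightarrow> y \<in> T \<Longrightarrow> min (\<mu> x) (\<mu> y) \<le> \<mu> (add x y)"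
  by (simp add: fuzzy_ideal_def)
lemma fi_ml: "fuzzy_ideal T G add z mult \<mu> \<Longrightarrow> x \<in> T \<Longrightarrow> y \<in> T \<Longrightarrow> g \<in> G \<Longrightarrow> \<mu> x \<le> \<mu> (mult x g y)"
  by (simp add: fuzzy_ideal_def)
lemma fi_mr: "fuzzy_ideal T G add z mult \<mu> \<Longrightarrow> x \<in> T \<Longrightarrow> y \<in> T \<Longrightarrow> g \<in> G \<Longrightarrow> \<mu> y \<le> \<mu> (mult x g y)"
  by (simp add: fuzzy_ideal_def)
lemma fi_z: "fuzzy_ideal T G add z mult \<mu> \<Longrightarrow> \<mu> z = 1"
  by (simp add: fuzzy_ideal_def)
lemma fi_le1: "fuzzy_ideal T G add z mult \<mu> \<Longrightarrow> x \<in> T \<Longrightarrow> \<mu> x \<le> 1"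
  by (simp add: fuzzy_ideal_def)
lemma fi_ge0: "fuzzy_ideal T G add z mult \<mu> \<Longrightarrow> x \<in> T \<Longrightarrow> 0 \<le> \<mu> x"
  by (simp add: fuzzy_ideal_def)
lemma fi_out: "fuzzy_ideal T G add z mult \<mu> \<Longrightarrow> x \<notin> T \<Longrightarrow> \<mu> x = 0"
  by (simp add: fuzzy_ideal_def)
lemma fi_fsum: "fuzzy_ideal T G add z mult \<mu> \<Longrightarrow> (\<forall>x\<in>T. \<forall>y\<in>T. add x y \<in> T) \<Longrightarrow> z \<in> T \<Longrightarrow> c \<le> 1
  \<Longrightarrow> (\<forall>k<m. f k \<in> T \<and> c \<le> \<mu> (f k)) \<Longrightarrow> c \<le> \<mu> (fsum add z f m)"
  using fsum_ge[of T add z c \<mu> m f] by (simp add: fuzzy_ideal_def)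

definition Ep :: "'x \<Rightarrow> nat \<Rightarrow> nat \<Rightarrow> 'x \<Rightarrow> (nat \<Rightarrow> nat \<Rightarrow> 'x)" where
  "Ep z p q x = (\<lambda>i j. if i = p \<and> j = q then x else z)"

locale gsz =
  fixes S :: "'a set" and G :: "'g set"
    and addS :: "'a \<Rightarrow> 'a \<Rightarrow> 'a" and zS :: 'a
    and addG :: "'g \<Rightarrow> 'g \<Rightarrow> 'g" and zG :: 'g
    and mult :: "'a \<Rightarrow> 'g \<Rightarrow> 'a \<Rightarrow> 'a" and n :: nat
  assumes gsz: "gamma_semiring_zero S G addS zS addG zG mult" and npos: "0 < n"
begin

lemma addS_closed[simp]: "x \<in> S \<Longrightarrow> y \<in> S \<Longrightarrow> addS x y \<in> S"
  using gsz by (auto simp: gamma_semiring_zero_def gamma_semiring_def comm_semigroup_on_def)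
lemma zS[simp]: "zS \<in> S" using gsz by (auto simp: gamma_semiring_zero_def)
lemma zG[simp]: "zG \<in> G" using gsz by (auto simp: gamma_semiring_zero_def)
lemma add_zl[simp]: "x \<in> S \<Longrightarrow> addS zS x = x" using gsz by (auto simp: gamma_semiring_zero_def)
lemma add_zr[simp]: "x \<in> S \<Longrightarrow> addS x zS = x" using gsz by (auto simp: gamma_semiring_zero_def)
lemma mult_closed[simp]: "x \<in> S \<Longrightarrow> \<alpha> \<in> G \<Longrightarrow> y \<in> S \<Longrightarrow> mult x \<alpha> y \<in> S"
  using gsz by (auto simp: gamma_semiring_zero_def gamma_semiring_def)
lemma mult_zl[simp]: "\<alpha> \<in> G \<Longrightarrow> x \<in> S \<Longrightarrow> mult zS \<alpha> x = zS" using gsz by (auto simp: gamma_semiring_zero_def)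
lemma mult_zr[simp]: "\<alpha> \<in> G \<Longrightarrow> x \<in> S \<Longrightarrow> mult x \<alpha> zS = zS" using gsz by (auto simp: gamma_semiring_zero_def)
lemma mult_zG[simp]: "x \<in> S \<Longrightarrow> y \<in> S \<Longrightarrow> mult x zG y = zS" using gsz by (auto simp: gamma_semiring_zero_def)

abbreviation "MS \<equiv> mat_carrier S zS n"
abbreviation "MG \<equiv> mat_carrier G zG n"
abbreviation "madd \<equiv> mat_add addS zS n"
abbreviation "mmult \<equiv> mat_mult addS zS mult n"

lemma MS_entry[simp]: "B \<in> MS \<Longrightarrow> i < n \<Longrightarrow> j < n \<Longrightarrow> B i j \<in> S"
  by (auto simp: mat_carrier_def)
lemma MG_entry[simp]: "B \<in> MG \<Longrightarrow> i < n \<Longrightarrow> j < n \<Longrightarrow> B i j \<in> G"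
  by (auto simp: mat_carrier_def)
lemma MS_out:
  assumes "B \<in> MS" "\<not> (i < n \<and> j < n)" shows "B i j = zS"
proof -
  have "n \<le> i \<or> n \<le> j" using assms(2) by auto
  then show ?thesis using assms(1) unfolding mat_carrier_def by blast
qed

lemma fsum_closed: "(\<forall>k<m. f k \<in> S) \<Longrightarrow> fsum addS zS f m \<in> S"
  by (induction m) auto

lemma fsum_single:
  assumes "\<forall>k<m. k \<noteq> p \<longrightarrow> f k = zS" and "p < m \<Longrightarrow> f p \<in> S"
  shows "fsum addS zS f m = (if p < m then f p else zS)"
  using assms
proof (induction m)
  case 0 then show ?case by simp
next
  case (Suc m)
  have IH: "fsum addS zS f m = (if p < m then f p else zS)" using Suc by auto
  show ?case
  proof (cases "m = p")
    case True then show ?thesis using IH Suc.prems by auto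
  next
    case False
    then have "f m = zS" using Suc.prems by auto
    moreover have "fsum addS zS f m \<in> S" using IH Suc.prems by auto
    ultimately show ?thesis using IH False by auto
  qed
qed

lemma fsum_zero: "fsum addS zS (\<lambda>_. zS) m = zS"
  by (induction m) auto

lemma madd_closed: "A \<in> MS \<Longrightarrow> B \<in> MS \<Longrightarrow> madd A B \<in> MS"
  by (auto simp del: MS_entry MG_entry simp: mat_carrier_def mat_add_def)
lemma mzero_in: "mat_zero zS \<in> MS"
  by (auto simp del: MS_entry MG_entry simp: mat_carrier_def mat_zero_def)
lemma mmult_closed: "A \<in> MS \<Longrightarrow> D \<in> MG \<Longrightarrow> B \<in> MS \<Longrightarrow> mmult A D B \<in> MS"
  by (auto simp del: MS_entry MG_entry simp: mat_carrier_def mat_mult_def intro!: fsum_closed)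

lemma Ep_S[simp]: "x \<in> S \<Longrightarrow> Ep zS p q x i j \<in> S" by (simp add: Ep_def)
lemma Ep_G[simp]: "x \<in> G \<Longrightarrow> Ep zG p q x i j \<in> G" by (simp add: Ep_def)
lemma Ep_MS: "x \<in> S \<Longrightarrow> p < n \<Longrightarrow> q < n \<Longrightarrow> Ep zS p q x \<in> MS"
  by (auto simp del: MS_entry MG_entry simp: Ep_def mat_carrier_def)
lemma Ep_MG: "x \<in> G \<Longrightarrow> p < n \<Longrightarrow> q < n \<Longrightarrow> Ep zG p q x \<in> MG"
  by (auto simp del: MS_entry MG_entry simp: Ep_def mat_carrier_def)

lemma Ep_fsum: "p < n \<Longrightarrow> q < n \<Longrightarrow>
  Ep zS p q (fsum addS zS g m) = fsum madd (mat_zero zS) (\<lambda>k. Ep zS p q (g k)) m"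
  by (rule ext)+ (auto simp: fsum_mat_add Ep_def fsum_zero)

lemma L1:
  assumes x: "x \<in> S" and d: "\<delta> \<in> G" and B: "B \<in> MS" and pqr: "p < n" "q < n" "r < n"
  shows "mmult (Ep zS p q x) (Ep zG q r \<delta>) B = (\<lambda>i j. if i = p \<and> j < n then mult x \<delta> (B r j) else zS)"
proof (rule ext)+
  fix i j
  show "mmult (Ep zS p q x) (Ep zG q r \<delta>) B i j = (if i = p \<and> j < n then mult x \<delta> (B r j) else zS)"
  proof (cases "i < n \<and> j < n")
    case False then show ?thesis using pqr by (auto simp: mat_mult_def)
  next
    case True
    have inner: "fsum addS zS (\<lambda>l. mult (Ep zS p q x i k) (Ep zG q r \<delta> k l) (B l j)) n
        = (if i = p \<and> k = q then mult x \<delta> (B r j) else zS)" for k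
      apply (subst fsum_single[where p=r])
      using True x d B pqr by (auto simp: Ep_def)
    show ?thesis
      using True x d B pqr
      by (simp add: mat_mult_def inner fsum_single[where p=q])
  qed
qed

lemma L2:
  assumes y: "y \<in> S" and g: "\<gamma> \<in> G" and A: "A \<in> MS" and pqr: "p < n" "q < n" "r < n"
  shows "mmult A (Ep zG r q \<gamma>) (Ep zS q p y) = (\<lambda>i j. if i < n \<and> j = p then mult (A i r) \<gamma> y else zS)"
proof (rule ext)+
  fix i j
  show "mmult A (Ep zG r q \<gamma>) (Ep zS q p y) i j = (if i < n \<and> j = p then mult (A i r) \<gamma> y else zS)"
  proof (cases "i < n \<and> j < n")
    case False then show ?thesis using pqr by (auto simp: mat_mult_def)
  next
    case True
    have inner: "fsum addS zS (\<lambda>l. mult (A i k) (Ep zG r q \<gamma> k l) (Ep zS q p y l j)) n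
        = (if k = r \<and> j = p then mult (A i r) \<gamma> y else zS)" if "k < n" for k
      apply (subst fsum_single[where p=q])
      using True y g A pqr that by (auto simp: Ep_def)
    show ?thesis
      using True y g A pqr
      by (simp add: mat_mult_def inner fsum_single[where p=r])
  qed
qed


definition lift :: "('a \<Rightarrow> real) \<Rightarrow> (nat \<Rightarrow> nat \<Rightarrow> 'a) \<Rightarrow> real" where
  "lift \<mu> A = (if A \<in> MS then Min ((\<lambda>(i,j). \<mu> (A i j)) ` ({..<n} \<times> {..<n})) else 0)"

definition down :: "((nat \<Rightarrow> nat \<Rightarrow> 'a) \<Rightarrow> real) \<Rightarrow> 'a \<Rightarrow> real" where
  "down \<nu> a = (if a \<in> S then \<nu> (Ep zS 0 0 a) else 0)"

lemma idx_fin: "finite ((\<lambda>(i,j). \<mu> (A i j)) ` ({..<n} \<times> {..<n}))" by simp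
lemma idx_ne: "(\<lambda>(i,j). \<mu> (A i j)) ` ({..<n} \<times> {..<n}) \<noteq> {}" using npos by auto

lemma lift_le: "A \<in> MS \<Longrightarrow> i < n \<Longrightarrow> j < n \<Longrightarrow> lift \<mu> A \<le> \<mu> (A i j)"
  unfolding lift_def by (auto intro!: Min_le)

lemma lift_ge: "A \<in> MS \<Longrightarrow> (\<And>i j. i < n \<Longrightarrow> j < n \<Longrightarrow> c \<le> \<mu> (A i j)) \<Longrightarrow> c \<le> lift \<mu> A"
  unfolding lift_def using idx_fin idx_ne by (auto simp: Min_ge_iff)

abbreviation "FS \<equiv> fuzzy_ideal S G addS zS mult"
abbreviation "FM \<equiv> fuzzy_ideal MS MG madd (mat_zero zS) mmult"

lemma madd_entry: "i < n \<Longrightarrow> j < n \<Longrightarrow> madd A B i j = addS (A i j) (B i j)"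
  by (simp add: mat_add_def)

lemma lift_ideal:
  assumes mu: "FS \<mu>"
  shows "FM (lift \<mu>)"
proof -
  have mz: "mat_zero zS \<in> MS" by (rule mzero_in)
  have l1: "lift \<mu> A \<le> 1" if "A \<in> MS" for A
    using lift_le[OF that npos npos, of \<mu>] fi_le1[OF mu MS_entry[OF that npos npos]] by linarith
  have l0: "0 \<le> lift \<mu> A" for A
  proof (cases "A \<in> MS")
    case True show ?thesis by (rule lift_ge[OF True]) (rule fi_ge0[OF mu MS_entry[OF True]])
  next
    case False then show ?thesis by (simp add: lift_def)
  qed
  have lz: "lift \<mu> (mat_zero zS) = 1"
    using l1[OF mz] lift_ge[OF mz, of 1 \<mu>] fi_z[OF mu] by (auto simp: mat_zero_def)
  have ladd: "min (lift \<mu> A) (lift \<mu> B) \<le> lift \<mu> (madd A B)" if "A \<in> MS" "B \<in> MS" for A B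
  proof (rule lift_ge[OF madd_closed[OF that]])
    fix i j assume ij: "i < n" "j < n"
    have "min (lift \<mu> A) (lift \<mu> B) \<le> min (\<mu> (A i j)) (\<mu> (B i j))"
      using lift_le[OF that(1) ij, of \<mu>] lift_le[OF that(2) ij, of \<mu>] by linarith
    also have "\<dots> \<le> \<mu> (madd A B i j)" using fi_add[OF mu] that ij by (simp add: madd_entry)
    finally show "min (lift \<mu> A) (lift \<mu> B) \<le> \<mu> (madd A B i j)" .
  qed
  have lmult: "c \<le> lift \<mu> (mmult A D B)"
    if A: "A \<in> MS" and D: "D \<in> MG" and B: "B \<in> MS"
      and c: "c \<le> 1" and h: "\<And>i k l j. i<n \<Longrightarrow> k<n \<Longrightarrow> l<n \<Longrightarrow> j<n \<Longrightarrow> c \<le> \<mu> (mult (A i k) (D k l) (B l j))"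
    for A D B c
  proof (rule lift_ge[OF mmult_closed[OF A D B]])
    fix i j assume ij: "i < n" "j < n"
    have cl: "\<forall>x\<in>S. \<forall>y\<in>S. addS x y \<in> S" by simp
    show "c \<le> \<mu> (mmult A D B i j)"
      unfolding mat_mult_def using ij
      apply simp
      apply (rule fi_fsum[OF mu cl zS c])
      apply (intro allI impI conjI)
       apply (rule fsum_closed) using A D B apply simp
      apply (rule fi_fsum[OF mu cl zS c])
      using A D B h by simp
  qed
  show ?thesis
    unfolding fuzzy_ideal_def
  proof (intro conjI ballI allI impI)
    show "0 \<le> lift \<mu> x" for x by (rule l0)
    show "lift \<mu> x \<le> 1" if "x \<in> MS" for x using l1 that .
    show "lift \<mu> x = 0" if "x \<notin> MS" for x using that by (simp add: lift_def)
    show "\<exists>x\<in>MS. lift \<mu> x \<noteq> 0" using mz lz by (metis zero_neq_one)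
    show "min (lift \<mu> x) (lift \<mu> y) \<le> lift \<mu> (madd x y)" if "x \<in> MS" "y \<in> MS" for x y
      using ladd that .
    show "lift \<mu> y \<le> lift \<mu> (mmult x g y)" if "x \<in> MS" "y \<in> MS" "g \<in> MG" for x y g
      apply (rule lmult) using that l1 apply auto
      using fi_mr[OF mu] lift_le[OF that(2)] by (meson MG_entry MS_entry order_trans)
    show "lift \<mu> x \<le> lift \<mu> (mmult x g y)" if "x \<in> MS" "y \<in> MS" "g \<in> MG" for x y g
      apply (rule lmult) using that l1 apply auto
      using fi_ml[OF mu] lift_le[OF that(1)] by (meson MG_entry MS_entry order_trans)
    show "lift \<mu> (mat_zero zS) = 1" by (rule lz)
  qed
qed

lemma Ep00_add: "x \<in> S \<Longrightarrow> y \<in> S \<Longrightarrow> Ep zS 0 0 (addS x y) = madd (Ep zS 0 0 x) (Ep zS 0 0 y)"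
  using npos by (intro ext) (auto simp: Ep_def mat_add_def)

lemma Ep00_mult: "x \<in> S \<Longrightarrow> g \<in> G \<Longrightarrow> y \<in> S \<Longrightarrow>
   Ep zS 0 0 (mult x g y) = mmult (Ep zS 0 0 x) (Ep zG 0 0 g) (Ep zS 0 0 y)"
proof -
  assume a: "x \<in> S" "g \<in> G" "y \<in> S"
  show ?thesis
    apply (subst L1[OF a(1) a(2) Ep_MS[OF a(3) npos npos] npos npos npos])
    apply (rule ext)+
    using a npos by (auto simp: Ep_def)
qed

lemma Ep_zero: "Ep zS p q zS = mat_zero zS"
  by (auto simp: Ep_def mat_zero_def)

lemma down_ideal:
  assumes nu: "FM \<nu>"
  shows "FS (down \<nu>)"
  unfolding fuzzy_ideal_def
proof (intro conjI ballI allI impI)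
  have E: "Ep zS 0 0 x \<in> MS" if "x \<in> S" for x using Ep_MS[OF that npos npos] .
  have EG: "Ep zG 0 0 x \<in> MG" if "x \<in> G" for x using Ep_MG[OF that npos npos] .
  show "0 \<le> down \<nu> x" if "x \<in> S" for x using that E fi_ge0[OF nu] by (simp add: down_def)
  show "down \<nu> x \<le> 1" if "x \<in> S" for x using that E fi_le1[OF nu] by (simp add: down_def)
  show "down \<nu> x = 0" if "x \<notin> S" for x using that by (simp add: down_def)
  show "down \<nu> zS = 1" using fi_z[OF nu] by (simp add: down_def Ep_zero)
  then show "\<exists>x\<in>S. down \<nu> x \<noteq> 0" using zS by (metis zero_neq_one)
  show "min (down \<nu> x) (down \<nu> y) \<le> down \<nu> (addS x y)" if "x \<in> S" "y \<in> S" for x y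
    using that E fi_add[OF nu] by (simp add: down_def Ep00_add)
  show "down \<nu> y \<le> down \<nu> (mult x g y)" if "x \<in> S" "y \<in> S" "g \<in> G" for x y g
    using that E EG fi_mr[OF nu] by (simp add: down_def Ep00_mult)
  show "down \<nu> x \<le> down \<nu> (mult x g y)" if "x \<in> S" "y \<in> S" "g \<in> G" for x y g
    using that E EG fi_ml[OF nu] by (simp add: down_def Ep00_mult)
qed

lemma down_lift: "FS \<mu> \<Longrightarrow> down (lift \<mu>) a = \<mu> a"
proof -
  assume mu: "FS \<mu>"
  show ?thesis
  proof (cases "a \<in> S")
    case False then show ?thesis using fi_out[OF mu] by (simp add: down_def)
  next
    case True
    have E: "Ep zS 0 0 a \<in> MS" using Ep_MS[OF True npos npos] .
    have "lift \<mu> (Ep zS 0 0 a) \<le> \<mu> a" using lift_le[OF E npos npos, of \<mu>] by (simp add: Ep_def)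
    moreover have "\<mu> a \<le> lift \<mu> (Ep zS 0 0 a)"
      apply (rule lift_ge[OF E]) using fi_z[OF mu] fi_le1[OF mu True] by (auto simp: Ep_def)
    ultimately show ?thesis using True by (simp add: down_def)
  qed
qed

end

locale gszu = gsz +
  fixes m1 :: nat and e and \<delta> and m2 :: nat and \<gamma> and f
  assumes lu: "\<forall>i<m1. e i \<in> S \<and> \<delta> i \<in> G" "\<forall>a\<in>S. fsum addS zS (\<lambda>i. mult (e i) (\<delta> i) a) m1 = a"
    and ru: "\<forall>j<m2. \<gamma> j \<in> G \<and> f j \<in> S" "\<forall>a\<in>S. fsum addS zS (\<lambda>j. mult a (\<gamma> j) (f j)) m2 = a"
begin

lemma U:
  assumes nu: "FM \<nu>" and c: "c \<le> 1" and pq: "p < n" "q < n" and x: "x \<in> S"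
    and h: "\<And>k l. k < m1 \<Longrightarrow> l < m2 \<Longrightarrow> c \<le> \<nu> (Ep zS p q (mult (mult (e k) (\<delta> k) x) (\<gamma> l) (f l)))"
  shows "c \<le> \<nu> (Ep zS p q x)"
proof -
  have cl: "\<forall>x\<in>MS. \<forall>y\<in>MS. madd x y \<in> MS" using madd_closed by blast
  have ek: "c \<le> \<nu> (Ep zS p q (mult (e k) (\<delta> k) x))" if k: "k < m1" for k
  proof -
    have ex: "mult (e k) (\<delta> k) x \<in> S" using lu k x by simp
    have s: "fsum addS zS (\<lambda>l. mult (mult (e k) (\<delta> k) x) (\<gamma> l) (f l)) m2 = mult (e k) (\<delta> k) x"
      using ru(2) ex by blast
    have eq: "Ep zS p q (mult (e k) (\<delta> k) x) =
        fsum madd (mat_zero zS) (\<lambda>l. Ep zS p q (mult (mult (e k) (\<delta> k) x) (\<gamma> l) (f l))) m2"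
      using Ep_fsum[OF pq, of "\<lambda>l. mult (mult (e k) (\<delta> k) x) (\<gamma> l) (f l)" m2] s by simp
    have "c \<le> \<nu> (fsum madd (mat_zero zS) (\<lambda>l. Ep zS p q (mult (mult (e k) (\<delta> k) x) (\<gamma> l) (f l))) m2)"
      apply (rule fi_fsum[OF nu cl mzero_in c])
      using h[OF k] ru(1) ex pq by (auto intro!: Ep_MS)
    then show ?thesis using eq by simp
  qed
  have eq: "Ep zS p q x = fsum madd (mat_zero zS) (\<lambda>k. Ep zS p q (mult (e k) (\<delta> k) x)) m1"
  proof -
    have s: "fsum addS zS (\<lambda>k. mult (e k) (\<delta> k) x) m1 = x" using lu(2) x by blast
    show ?thesis using Ep_fsum[OF pq, of "\<lambda>k. mult (e k) (\<delta> k) x" m1] s by simp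
  qed
  have "c \<le> \<nu> (fsum madd (mat_zero zS) (\<lambda>k. Ep zS p q (mult (e k) (\<delta> k) x)) m1)"
    apply (rule fi_fsum[OF nu cl mzero_in c])
    using ek lu(1) x pq by (auto intro!: Ep_MS)
  then show ?thesis using eq by simp
qed

lemma extract_le:
  assumes nu: "FM \<nu>" and A: "A \<in> MS" and ij: "i < n" "j < n"
  shows "\<nu> A \<le> \<nu> (Ep zS 0 0 (A i j))"
proof (rule U[OF nu fi_le1[OF nu A] npos npos MS_entry[OF A ij]])
  fix k l assume k: "k < m1" and l: "l < m2"
  have ek: "e k \<in> S" "\<delta> k \<in> G" using lu(1) k by auto
  have fl: "\<gamma> l \<in> G" "f l \<in> S" using ru(1) l by auto
  define M1 where "M1 = mmult (Ep zS 0 i (e k)) (Ep zG i i (\<delta> k)) A"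
  have M1: "M1 = (\<lambda>i' j'. if i' = 0 \<and> j' < n then mult (e k) (\<delta> k) (A i j') else zS)"
    unfolding M1_def using L1[OF ek A npos ij(1) ij(1)] .
  have M1in: "M1 \<in> MS" unfolding M1_def by (intro mmult_closed Ep_MS Ep_MG ek A npos ij)
  have eq: "mmult M1 (Ep zG j j (\<gamma> l)) (Ep zS j 0 (f l)) = Ep zS 0 0 (mult (mult (e k) (\<delta> k) (A i j)) (\<gamma> l) (f l))"
    apply (subst L2[OF fl(2) fl(1) M1in npos ij(2) ij(2)])
    apply (rule ext)+
    unfolding M1 using ek fl A ij npos by (auto simp: Ep_def)
  have "\<nu> A \<le> \<nu> M1" unfolding M1_def
    by (rule fi_mr[OF nu]) (auto intro!: Ep_MS Ep_MG ek A npos ij)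
  also have "\<dots> \<le> \<nu> (mmult M1 (Ep zG j j (\<gamma> l)) (Ep zS j 0 (f l)))"
    by (rule fi_ml[OF nu]) (auto intro!: Ep_MS Ep_MG fl M1in npos ij)
  finally show "\<nu> A \<le> \<nu> (Ep zS 0 0 (mult (mult (e k) (\<delta> k) (A i j)) (\<gamma> l) (f l)))" using eq by simp
qed

lemma move_le:
  assumes nu: "FM \<nu>" and x: "x \<in> S" and pq: "p < n" "q < n"
  shows "\<nu> (Ep zS 0 0 x) \<le> \<nu> (Ep zS p q x)"
proof (rule U[OF nu fi_le1[OF nu Ep_MS[OF x npos npos]] pq x])
  fix k l assume k: "k < m1" and l: "l < m2"
  have ek: "e k \<in> S" "\<delta> k \<in> G" using lu(1) k by auto
  have fl: "\<gamma> l \<in> G" "f l \<in> S" using ru(1) l by auto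
  have E: "Ep zS 0 0 x \<in> MS" using Ep_MS[OF x npos npos] .
  define M1 where "M1 = mmult (Ep zS p 0 (e k)) (Ep zG 0 0 (\<delta> k)) (Ep zS 0 0 x)"
  have M1: "M1 = (\<lambda>i' j'. if i' = p \<and> j' < n then mult (e k) (\<delta> k) (Ep zS 0 0 x 0 j') else zS)"
    unfolding M1_def using L1[OF ek E pq(1) npos npos] .
  have M1in: "M1 \<in> MS" unfolding M1_def by (intro mmult_closed Ep_MS Ep_MG ek E npos pq)
  have eq: "mmult M1 (Ep zG 0 0 (\<gamma> l)) (Ep zS 0 q (f l)) = Ep zS p q (mult (mult (e k) (\<delta> k) x) (\<gamma> l) (f l))"
    apply (subst L2[OF fl(2) fl(1) M1in pq(2) npos npos])
    apply (rule ext)+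
    unfolding M1 using ek fl x pq npos by (auto simp: Ep_def)
  have "\<nu> (Ep zS 0 0 x) \<le> \<nu> M1" unfolding M1_def
    by (rule fi_mr[OF nu]) (auto intro!: Ep_MS Ep_MG ek E npos pq)
  also have "\<dots> \<le> \<nu> (mmult M1 (Ep zG 0 0 (\<gamma> l)) (Ep zS 0 q (f l)))"
    by (rule fi_ml[OF nu]) (auto intro!: Ep_MS Ep_MG fl M1in npos pq)
  finally show "\<nu> (Ep zS 0 0 x) \<le> \<nu> (Ep zS p q (mult (mult (e k) (\<delta> k) x) (\<gamma> l) (f l)))" using eq by simp
qed

lemma decomp:
  assumes A: "A \<in> MS"
  shows "A = fsum madd (mat_zero zS) (\<lambda>i. fsum madd (mat_zero zS) (\<lambda>j. Ep zS i j (A i j)) n) n"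
proof (intro ext)
  fix a b
  show "A a b = fsum madd (mat_zero zS) (\<lambda>i. fsum madd (mat_zero zS) (\<lambda>j. Ep zS i j (A i j)) n) n a b"
  proof (cases "a < n \<and> b < n")
    case False then show ?thesis using MS_out[OF A False] by (auto simp: fsum_mat_add)
  next
    case True
    have inner: "fsum addS zS (\<lambda>k. Ep zS i k (A i k) a b) n = (if i = a then A a b else zS)" if "i < n" for i
      apply (subst fsum_single[where p=b]) using True A that by (auto simp: Ep_def)
    show ?thesis using True A
      by (simp add: fsum_mat_add inner fsum_single[where p=a])
  qed
qed

lemma lift_down: "FM \<nu> \<Longrightarrow> lift (down \<nu>) A = \<nu> A"
proof -
  assume nu: "FM \<nu>"
  show ?thesis
  proof (cases "A \<in> MS")
    case False then show ?thesis using fi_out[OF nu] by (simp add: lift_def)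
  next
    case A: True
    have dv: "down \<nu> (A i j) = \<nu> (Ep zS 0 0 (A i j))" if "i < n" "j < n" for i j
      using A that by (simp add: down_def)
    have "\<nu> A \<le> lift (down \<nu>) A"
      by (rule lift_ge[OF A]) (simp add: dv extract_le[OF nu A])
    moreover have "lift (down \<nu>) A \<le> \<nu> A"
    proof -
      let ?c = "lift (down \<nu>) A"
      have c1: "?c \<le> 1" using lift_le[OF A npos npos, of "down \<nu>"] dv[OF npos npos] fi_le1[OF nu Ep_MS[OF MS_entry[OF A npos npos] npos npos]] by simp
      have cl: "\<forall>x\<in>MS. \<forall>y\<in>MS. madd x y \<in> MS" using madd_closed by blast
      have t: "Ep zS i j (A i j) \<in> MS \<and> ?c \<le> \<nu> (Ep zS i j (A i j))" if "i < n" "j < n" for i j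
        using lift_le[OF A that, of "down \<nu>"] dv[OF that] move_le[OF nu MS_entry[OF A that] that] Ep_MS[OF MS_entry[OF A that] that]
        by simp
      have "?c \<le> \<nu> (fsum madd (mat_zero zS) (\<lambda>i. fsum madd (mat_zero zS) (\<lambda>j. Ep zS i j (A i j)) n) n)"
        apply (rule fi_fsum[OF nu cl mzero_in c1])
        apply (intro allI impI conjI)
         apply (rule conjunct1[OF fsum_ge[OF cl mzero_in, of ?c \<nu>]])
           apply (simp add: fi_z[OF nu] c1) using fi_add[OF nu] apply blast using t apply blast
        apply (rule fi_fsum[OF nu cl mzero_in c1]) using t by blast
      then show ?thesis using decomp[OF A] by simp
    qed
    ultimately show ?thesis by simp
  qed
qed

end
theorem theorem3p12:
  fixes S :: "'a set" and G :: "'g set"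
    and addS :: "'a \<Rightarrow> 'a \<Rightarrow> 'a" and zS :: 'a
    and addG :: "'g \<Rightarrow> 'g \<Rightarrow> 'g" and zG :: 'g
    and mult :: "'a \<Rightarrow> 'g \<Rightarrow> 'a \<Rightarrow> 'a" and n :: nat
  assumes "gamma_semiring_zero S G addS zS addG zG mult"
    and "has_left_unity S G addS zS mult"
    and "has_right_unity S G addS zS mult"
    and "0 < n"
  shows "\<exists>\<phi>. bij_betw \<phi> (fuzzy_ideals S G addS zS mult)
              (fuzzy_ideals (mat_carrier S zS n) (mat_carrier G zG n)
                 (mat_add addS zS n) (mat_zero zS) (mat_mult addS zS mult n)) \<and>
            (\<forall>\<mu>\<in>fuzzy_ideals S G addS zS mult. \<forall>\<nu>\<in>fuzzy_ideals S G addS zS mult.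
               fuzzy_incl S \<mu> \<nu> \<longrightarrow> fuzzy_incl (mat_carrier S zS n) (\<phi> \<mu>) (\<phi> \<nu>))"
proof -
  interpret gsz S G addS zS addG zG mult n using assms by unfold_locales
  obtain m1 e \<delta> where l: "\<forall>i<m1. e i \<in> S \<and> \<delta> i \<in> G"
      "\<forall>a\<in>S. fsum addS zS (\<lambda>i. mult (e i) (\<delta> i) a) m1 = a"
    using assms(2) unfolding has_left_unity_def by blast
  obtain m2 \<gamma> f where r: "\<forall>j<m2. \<gamma> j \<in> G \<and> f j \<in> S"
      "\<forall>a\<in>S. fsum addS zS (\<lambda>j. mult a (\<gamma> j) (f j)) m2 = a"
    using assms(3) unfolding has_right_unity_def by blast
  interpret gszu S G addS zS addG zG mult n m1 e \<delta> m2 \<gamma> f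
    by (intro gszu.intro gsz_axioms gszu_axioms.intro l r)
  have bij: "bij_betw lift (fuzzy_ideals S G addS zS mult)
              (fuzzy_ideals MS MG madd (mat_zero zS) mmult)"
  proof (rule bij_betw_byWitness[where f'=down])
    show "\<forall>a\<in>fuzzy_ideals S G addS zS mult. down (lift a) = a"
      by (auto simp: fuzzy_ideals_def intro!: ext down_lift)
    show "\<forall>a'\<in>fuzzy_ideals MS MG madd (mat_zero zS) mmult. lift (down a') = a'"
      by (auto simp: fuzzy_ideals_def intro!: ext lift_down)
    show "lift ` fuzzy_ideals S G addS zS mult \<subseteq> fuzzy_ideals MS MG madd (mat_zero zS) mmult"
      by (auto simp: fuzzy_ideals_def intro: lift_ideal)
    show "down ` fuzzy_ideals MS MG madd (mat_zero zS) mmult \<subseteq> fuzzy_ideals S G addS zS mult"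
      by (auto simp: fuzzy_ideals_def intro: down_ideal)
  qed
  have mono: "fuzzy_incl MS (lift \<mu>) (lift \<nu>)" if "fuzzy_incl S \<mu> \<nu>" for \<mu> \<nu>
    unfolding fuzzy_incl_def
  proof
    fix A assume A: "A \<in> MS"
    show "lift \<mu> A \<le> lift \<nu> A"
    proof (rule lift_ge[OF A])
      fix i j assume ij: "i < n" "j < n"
      show "lift \<mu> A \<le> \<nu> (A i j)"
      proof -
        have "\<mu> (A i j) \<le> \<nu> (A i j)" using that MS_entry[OF A ij] unfolding fuzzy_incl_def by blast
        then show ?thesis using lift_le[OF A ij, of \<mu>] by linarith
      qed
    qed
  qed
  show ?thesis by (intro exI[of _ lift] conjI bij ballI impI mono)
qed

end
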